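(* Let $E$ be a finite set and $\mathcal{F}\subseteq 2^E$ a non-empty downward-closed set system that is not a matroid. Then there exist weights $w:E\to\mathbb{R}_{\ge 0}$ such that an optimal solution to the nominal problem $\max_{S\in\mathcal{F}} w(S)$ is not an optimal first-stage solution of the robust counterpart $$\max_{S\in\mathcal{F}}\ \min_{f\in E\cup\{\emptyset\}}\ \max_{\substack{e\in (E\setminus(S\cup\{f\}))\cup\{\emptyset\}\\ (S\setminus\{f\})\cup\{e\}\in\mathcal{F}}} w\big((S\setminus\{f\})\cup\{e\}\big).$$
   Context: Downward-closed: $X\in\mathcal{F}$, $X'\subseteq X$ imply $X'\in\mathcal{F}$. A non-empty downward-closed system is a matroid iff whenever $I,J\in\mathcal{F}$ with $|I|<|J|$ there is $g\in J\setminus I$ with $I\cup\{g\}\in\mathcal{F}$. $w(S)=\sum_{x\in S}w(x)$. In the robust counterpart, $f=\emptyset$ means no deletion and $e=\emptyset$ means no addition. *)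

theory Defs
  imports Complex_Main
begin

definition downward_closed :: "'a set set \<Rightarrow> bool" where
  "downward_closed \<F> \<longleftrightarrow> (\<forall>X\<in>\<F>. \<forall>X'. X' \<subseteq> X \<longrightarrow> X' \<in> \<F>)"

definition is_matroid :: "'a set set \<Rightarrow> bool" where
  "is_matroid \<F> \<longleftrightarrow> \<F> \<noteq> {} \<and> downward_closed \<F> \<and>
     (\<forall>I\<in>\<F>. \<forall>J\<in>\<F>. card I < card J \<longrightarrow> (\<exists>g\<in>J - I. insert g I \<in> \<F>))"

text \<open>Deletions f and additions e are options; None plays the role of the empty choice.\<close>
definition recourse_value ::
  "'a set \<Rightarrow> 'a set set \<Rightarrow> ('a \<Rightarrow> real) \<Rightarrow> 'a set \<Rightarrow> 'a option \<Rightarrow> real" where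
  "recourse_value E \<F> w S f =
     Max ((\<lambda>e. sum w ((S - set_option f) \<union> set_option e)) `
          {e \<in> insert None (Some ` (E - (S \<union> set_option f))).
             (S - set_option f) \<union> set_option e \<in> \<F>})"

definition robust_value :: "'a set \<Rightarrow> 'a set set \<Rightarrow> ('a \<Rightarrow> real) \<Rightarrow> 'a set \<Rightarrow> real" where
  "robust_value E \<F> w S = Min (recourse_value E \<F> w S ` insert None (Some ` E))"

definition nominal_optimal :: "'a set set \<Rightarrow> ('a \<Rightarrow> real) \<Rightarrow> 'a set \<Rightarrow> bool" where
  "nominal_optimal \<F> w S \<longleftrightarrow> S \<in> \<F> \<and> (\<forall>S'\<in>\<F>. sum w S' \<le> sum w S)"

definition robust_optimal :: "'a set \<Rightarrow> 'a set set \<Rightarrow> ('a \<Rightarrow> real) \<Rightarrow> 'a set \<Rightarrow> bool" where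
  "robust_optimal E \<F> w S \<longleftrightarrow> S \<in> \<F> \<and>
     (\<forall>S'\<in>\<F>. robust_value E \<F> w S' \<le> robust_value E \<F> w S)"

end

theory Submission
  imports Defs
begin

lemma local_aug:
  assumes fin: "finite E" and sub: "\<F> \<subseteq> Pow E" and dc: "downward_closed \<F>"
    and L: "\<And>Y x g h. x \<notin> Y \<Longrightarrow> g \<notin> Y \<Longrightarrow> h \<notin> Y \<Longrightarrow> g \<noteq> h \<Longrightarrow> x \<noteq> g \<Longrightarrow> x \<noteq> h
       \<Longrightarrow> insert x Y \<in> \<F> \<Longrightarrow> insert g (insert h Y) \<in> \<F>
       \<Longrightarrow> insert x (insert g Y) \<in> \<F> \<or> insert x (insert h Y) \<in> \<F>"
  shows "\<forall>I J. I \<in> \<F> \<longrightarrow> J \<in> \<F> \<longrightarrow> card (I - J) = n \<longrightarrow> card I < card J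
          \<longrightarrow> (\<exists>g\<in>J - I. insert g I \<in> \<F>)"
proof (induction n)
  case 0
  show ?case
  proof (intro allI impI)
    fix I J assume I: "I \<in> \<F>" and J: "J \<in> \<F>" and c: "card (I - J) = 0" and lt: "card I < card J"
    have fI: "finite I" and fJ: "finite J" using I J sub fin finite_subset by blast+
    have "I \<subseteq> J" using c fI by auto
    then have "J - I \<noteq> {}" using lt by auto
    then obtain g where g: "g \<in> J - I" by blast
    have "insert g I \<subseteq> J" using g \<open>I \<subseteq> J\<close> by auto
    then have "insert g I \<in> \<F>" using dc J unfolding downward_closed_def by blast
    then show "\<exists>g\<in>J - I. insert g I \<in> \<F>" using g by blast
  qed
next
  case (Suc n)
  show ?case
  proof (intro allI impI)
    fix I J assume I: "I \<in> \<F>" and J: "J \<in> \<F>" and c: "card (I - J) = Suc n" and lt: "card I < card J"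
    have fI: "finite I" and fJ: "finite J" using I J sub fin finite_subset by blast+
    obtain x where x: "x \<in> I - J" using c by (metis card.empty ex_in_conv nat.distinct(1))
    define I' where "I' = I - {x}"
    have I'F: "I' \<in> \<F>" using dc I unfolding downward_closed_def I'_def by blast
    have eq: "I' - J = (I - J) - {x}" unfolding I'_def by auto
    have cI': "card (I' - J) = n" unfolding eq using c x fI by (simp add: card_Diff_singleton)
    have cardI': "card I' = card I - 1" using x fI unfolding I'_def by auto
    have "card I' < card J" using cardI' lt by linarith
    then obtain g where g: "g \<in> J - I'" and gF: "insert g I' \<in> \<F>"
      using Suc.IH I'F J cI' by blast
    have gI: "g \<notin> I" using g x unfolding I'_def by auto
    have c2: "card (insert g I' - J) = n" using cI' g by (simp add: insert_Diff_if)
    have "card (insert g I') = Suc (card I')" using gI fI unfolding I'_def by simp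
    moreover have "card I > 0" using fI x by (auto simp: card_gt_0_iff)
    ultimately have "card (insert g I') = card I" using cardI' by simp
    then have "card (insert g I') < card J" using lt by simp
    then obtain h where h: "h \<in> J - insert g I'" and hF: "insert h (insert g I') \<in> \<F>"
      using Suc.IH gF J c2 by blast
    have hI: "h \<notin> I" using h x unfolding I'_def by auto
    have IxI: "insert x I' = I" using x unfolding I'_def by auto
    have "insert x (insert g I') \<in> \<F> \<or> insert x (insert h I') \<in> \<F>"
      apply (rule L)
      using x g h hF IxI I unfolding I'_def by (auto simp: insert_commute)
    then show "\<exists>g\<in>J - I. insert g I \<in> \<F>"
      using IxI g h gI hI by (metis DiffD1 DiffI insert_commute)
  qed
qed


lemma sum_w:
  fixes Y :: "'a set"
  assumes "finite T" "x \<notin> Y" "y1 \<notin> Y" "y2 \<notin> Y" "x \<noteq> y1" "x \<noteq> y2" "y1 \<noteq> y2"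
  shows "sum (\<lambda>v. if v \<in> Y then 2 else if v = x then 2 else if v = y1 then 4 else if v = y2 then 1 else 0 :: real) T
     = 2 * real (card (T \<inter> Y)) + (if x \<in> T then 2 else 0) + (if y1 \<in> T then 4 else 0) + (if y2 \<in> T then 1 else 0)"
  using assms(1)
proof (induction T rule: finite_induct)
  case empty
  then show ?case by simp
next
  case (insert a T)
  have fT: "finite (T \<inter> Y)" using insert by simp
  show ?case
  proof (cases "a \<in> Y")
    case True
    then have "insert a T \<inter> Y = insert a (T \<inter> Y)" by auto
    then show ?thesis using insert True assms fT by (auto simp: card_insert_if)
  next
    case False
    then have "insert a T \<inter> Y = T \<inter> Y" by auto
    then show ?thesis using insert False assms by auto
  qed
qed

lemma config:
  assumes fin: "finite E" and sub: "\<F> \<subseteq> Pow E" and ne: "\<F> \<noteq> {}" and dc: "downward_closed \<F>"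
    and nm: "\<not> is_matroid \<F>"
  shows "\<exists>Y x g h. x \<notin> Y \<and> g \<notin> Y \<and> h \<notin> Y \<and> g \<noteq> h \<and> x \<noteq> g \<and> x \<noteq> h
       \<and> insert x Y \<in> \<F> \<and> insert g (insert h Y) \<in> \<F>
       \<and> insert x (insert g Y) \<notin> \<F> \<and> insert x (insert h Y) \<notin> \<F>"
proof (rule ccontr)
  assume "\<not> ?thesis"
  then have L: "\<And>Y x g h. x \<notin> Y \<Longrightarrow> g \<notin> Y \<Longrightarrow> h \<notin> Y \<Longrightarrow> g \<noteq> h \<Longrightarrow> x \<noteq> g \<Longrightarrow> x \<noteq> h
       \<Longrightarrow> insert x Y \<in> \<F> \<Longrightarrow> insert g (insert h Y) \<in> \<F>
       \<Longrightarrow> insert x (insert g Y) \<in> \<F> \<or> insert x (insert h Y) \<in> \<F>" by blast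
  have "\<forall>I\<in>\<F>. \<forall>J\<in>\<F>. card I < card J \<longrightarrow> (\<exists>g\<in>J - I. insert g I \<in> \<F>)"
    using local_aug[OF fin sub dc L] by blast
  then show False using nm ne dc unfolding is_matroid_def by blast
qed

theorem theorem2:
  fixes E :: "'a set" and \<F> :: "'a set set"
  assumes "finite E"
    and "\<F> \<subseteq> Pow E"
    and "\<F> \<noteq> {}"
    and "downward_closed \<F>"
    and "\<not> is_matroid \<F>"
  shows "\<exists>w :: 'a \<Rightarrow> real. (\<forall>x\<in>E. 0 \<le> w x) \<and>
           (\<exists>S. nominal_optimal \<F> w S \<and> \<not> robust_optimal E \<F> w S)"
proof -
  note fin = assms(1) and sub = assms(2) and dc = assms(4)
  obtain Y x y1 y2 where xY: "x \<notin> Y" and y1Y: "y1 \<notin> Y" and y2Y: "y2 \<notin> Y" and d12: "y1 \<noteq> y2"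
    and dx1: "x \<noteq> y1" and dx2: "x \<noteq> y2"
    and YxF: "insert x Y \<in> \<F>" and Y12F: "insert y1 (insert y2 Y) \<in> \<F>"
    and n1: "insert x (insert y1 Y) \<notin> \<F>" and n2: "insert x (insert y2 Y) \<notin> \<F>"
    using config[OF assms] by blast
  have dcI: "\<And>A B. A \<in> \<F> \<Longrightarrow> B \<subseteq> A \<Longrightarrow> B \<in> \<F>" using dc unfolding downward_closed_def by blast
  have inE: "\<And>A. A \<in> \<F> \<Longrightarrow> A \<subseteq> E" using sub by blast
  have finF: "\<And>A. A \<in> \<F> \<Longrightarrow> finite A" using inE fin finite_subset by blast
  have YE: "Y \<subseteq> E" and xE: "x \<in> E" and y1E: "y1 \<in> E" and y2E: "y2 \<in> E"
    using inE[OF YxF] inE[OF Y12F] by auto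
  have finY: "finite Y" using YE fin finite_subset by blast
  define w :: "'a \<Rightarrow> real" where
    "w = (\<lambda>v. if v \<in> Y then 2 else if v = x then 2 else if v = y1 then 4 else if v = y2 then 1 else 0)"
  have SW: "\<And>T. finite T \<Longrightarrow> sum w T = 2 * real (card (T \<inter> Y)) + (if x \<in> T then 2 else 0)
      + (if y1 \<in> T then 4 else 0) + (if y2 \<in> T then 1 else 0)"
    unfolding w_def by (rule sum_w) (use xY y1Y y2Y dx1 dx2 d12 in auto)
  define k where "k = card Y"
  define S where "S = insert y1 (insert y2 Y)"
  define S' where "S' = insert y1 Y"
  have wS: "sum w S = 2 * k + 5"
  proof -
    have "S \<inter> Y = Y" unfolding S_def by auto
    then show ?thesis using SW[of S] finY xY y1Y y2Y dx1 dx2 unfolding S_def k_def by simp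
  qed
  have nom: "nominal_optimal \<F> w S"
    unfolding nominal_optimal_def
  proof (intro conjI ballI)
    show "S \<in> \<F>" using Y12F S_def by simp
    fix T assume T: "T \<in> \<F>"
    have fT: "finite T" using finF T .
    have c1: "card (T \<inter> Y) \<le> k" unfolding k_def using finY by (simp add: card_mono)
    show "sum w T \<le> sum w S"
    proof (cases "Y \<subseteq> T")
      case True
      have "\<not> (x \<in> T \<and> y1 \<in> T)" using dcI[OF T, of "insert x (insert y1 Y)"] True n1 by auto
      moreover have "\<not> (x \<in> T \<and> y2 \<in> T)" using dcI[OF T, of "insert x (insert y2 Y)"] True n2 by auto
      ultimately show ?thesis using SW[OF fT] wS c1 by auto
    next
      case False
      then have "T \<inter> Y \<subset> Y" by auto
      then have "card (T \<inter> Y) < k" unfolding k_def using finY by (simp add: psubset_card_mono)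
      then have "real (card (T \<inter> Y)) \<le> real k - 1" by linarith
      then show ?thesis using SW[OF fT] wS by auto
    qed
  qed
  have finRV: "\<And>A f. finite ((\<lambda>e. sum w ((A - set_option f) \<union> set_option e)) `
          {e \<in> insert None (Some ` (E - (A \<union> set_option f))). (A - set_option f) \<union> set_option e \<in> \<F>})"
    using fin by auto
  have rS: "robust_value E \<F> w S \<le> 2 * real k + 1"
  proof -
    have "robust_value E \<F> w S \<le> recourse_value E \<F> w S (Some y1)"
      unfolding robust_value_def using fin y1E by (intro Min_le) auto
    also have "\<dots> \<le> 2 * real k + 1"
    proof -
      define B where "B = (\<lambda>e. sum w ((S - set_option (Some y1)) \<union> set_option e)) `
          {e \<in> insert None (Some ` (E - (S \<union> set_option (Some y1)))). (S - set_option (Some y1)) \<union> set_option e \<in> \<F>}"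
      have rv: "recourse_value E \<F> w S (Some y1) = Max B" unfolding recourse_value_def B_def ..
      have finB: "finite B" unfolding B_def by (rule finRV)
      have "S - {y1} \<in> \<F>" using dcI[OF Y12F, of "S - {y1}"] unfolding S_def by auto
      then have neB: "B \<noteq> {}" unfolding B_def by auto
      have SY: "S - {y1} = insert y2 Y" unfolding S_def using d12 y1Y by auto
      have base: "sum w (insert y2 Y) = 2 * k + 1"
      proof -
        have "insert y2 Y \<inter> Y = Y" by auto
        then show ?thesis using SW[of "insert y2 Y"] finY xY y1Y y2Y dx2 d12 unfolding k_def by simp
      qed
      have bnd: "\<forall>a\<in>B. a \<le> 2 * real k + 1"
      proof
        fix a assume "a \<in> B"
        then obtain e where e: "e \<in> insert None (Some ` (E - (S \<union> {y1})))"
          and eF: "(S - {y1}) \<union> set_option e \<in> \<F>" and a: "a = sum w ((S - {y1}) \<union> set_option e)"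
          unfolding B_def by auto
        show "a \<le> 2 * real k + 1"
        proof (cases e)
          case None
          then show ?thesis using a SY base by simp
        next
          case (Some v)
          then have v: "v \<in> E" "v \<notin> S" "v \<noteq> y1" using e by auto
          have "v \<noteq> x"
          proof
            assume "v = x"
            then have "insert x (insert y2 Y) \<in> \<F>" using eF Some SY by (simp add: insert_commute)
            then show False using n2 by simp
          qed
          have vY: "v \<notin> Y" "v \<noteq> y2" using v unfolding S_def by auto
          have "(S - {y1}) \<union> set_option e = insert v (insert y2 Y)" using Some SY by auto
          moreover have "insert v (insert y2 Y) \<inter> Y = Y" using vY by auto
          ultimately have "a = 2 * k + 1" using a SW[of "insert v (insert y2 Y)"] finY xY y1Y y2Y vY \<open>v \<noteq> x\<close> v(3) dx2 d12
            unfolding k_def by simp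
          then show ?thesis by simp
        qed
      qed
      show ?thesis unfolding rv using finB neB bnd by (simp add: Max_le_iff add.commute)
    qed
    finally show ?thesis .
  qed
  have S'F: "S' \<in> \<F>" using dcI[OF Y12F, of S'] unfolding S'_def by auto
  have rS': "robust_value E \<F> w S' \<ge> 2 * real k + 2"
  proof -
    have f1: "finite (recourse_value E \<F> w S' ` insert None (Some ` E))" using fin by simp
    have f2: "recourse_value E \<F> w S' ` insert None (Some ` E) \<noteq> {}" by simp
    have f3: "\<forall>a\<in>recourse_value E \<F> w S' ` insert None (Some ` E). 2 * real k + 2 \<le> a"
    proof
      fix a assume "a \<in> recourse_value E \<F> w S' ` insert None (Some ` E)"
      then obtain f where f: "f \<in> insert None (Some ` E)" and a: "a = recourse_value E \<F> w S' f" by auto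
      define A where "A = (\<lambda>e. sum w ((S' - set_option f) \<union> set_option e)) `
          {e \<in> insert None (Some ` (E - (S' \<union> set_option f))). (S' - set_option f) \<union> set_option e \<in> \<F>}"
      have aA: "a = Max A" unfolding a recourse_value_def A_def ..
      have finA: "finite A" unfolding A_def by (rule finRV)
      have "\<exists>b\<in>A. 2 * real k + 2 \<le> b"
      proof (cases "f = Some y1")
        case True
        have mem: "Some x \<in> {e \<in> insert None (Some ` (E - (S' \<union> set_option f))). (S' - set_option f) \<union> set_option e \<in> \<F>}"
        proof -
          have "(S' - {y1}) \<union> {x} = insert x Y" unfolding S'_def using y1Y by auto
          then show ?thesis using True xE xY dx1 YxF unfolding S'_def by auto
        qed
        have val: "sum w ((S' - set_option f) \<union> set_option (Some x)) = 2 * k + 2"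
        proof -
          have eq: "(S' - set_option f) \<union> set_option (Some x) = insert x Y" unfolding S'_def using True y1Y by auto
          have "insert x Y \<inter> Y = Y" by auto
          then show ?thesis unfolding eq using SW[of "insert x Y"] finY xY y1Y y2Y dx1 dx2 unfolding k_def by simp
        qed
        have "sum w ((S' - set_option f) \<union> set_option (Some x)) \<in> A"
          unfolding A_def by (rule image_eqI[OF _ mem]) simp
        then show ?thesis using val by (intro bexI[of _ "sum w ((S' - set_option f) \<union> set_option (Some x))"]) simp_all
      next
        case False
        have mem: "None \<in> {e \<in> insert None (Some ` (E - (S' \<union> set_option f))). (S' - set_option f) \<union> set_option e \<in> \<F>}"
          using dcI[OF S'F, of "S' - set_option f"] by auto
        have val: "sum w (S' - set_option f) \<ge> 2 * k + 2"
        proof (cases f)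
          case None
          have "S' \<inter> Y = Y" unfolding S'_def by auto
          then show ?thesis using None SW[of S'] finY xY y1Y y2Y dx1 d12 unfolding S'_def k_def by simp
        next
          case (Some z)
          have zy1: "z \<noteq> y1" using Some False by simp
          show ?thesis
          proof (cases "z \<in> Y")
            case True
            have eq: "S' - set_option f = insert y1 (Y - {z})" unfolding S'_def using Some zy1 by auto
            have "insert y1 (Y - {z}) \<inter> Y = Y - {z}" using y1Y by auto
            moreover have "card (Y - {z}) = k - 1" using True finY unfolding k_def by simp
            moreover have "k \<ge> 1" using True finY unfolding k_def by (metis One_nat_def Suc_leI card_gt_0_iff empty_iff)
            ultimately show ?thesis unfolding eq using SW[of "insert y1 (Y - {z})"] finY xY y1Y y2Y dx1 d12 by simp
          next
            case False
            have eq: "S' - set_option f = S'" unfolding S'_def using Some zy1 False by auto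
            have "S' \<inter> Y = Y" unfolding S'_def by auto
            then show ?thesis unfolding eq using SW[of S'] finY xY y1Y y2Y dx1 d12 unfolding S'_def k_def by simp
          qed
        qed
        have "sum w ((S' - set_option f) \<union> set_option None) \<in> A"
          unfolding A_def by (rule image_eqI[OF _ mem]) simp
        then show ?thesis using val by (intro bexI[of _ "sum w ((S' - set_option f) \<union> set_option None)"]) simp_all
      qed
      then show "2 * real k + 2 \<le> a" unfolding aA using finA by (metis Max_ge order_trans)
    qed
    show ?thesis unfolding robust_value_def using Min_ge_iff[OF f1 f2] f3 by (simp add: add.commute)
  qed
  have "\<not> robust_optimal E \<F> w S"
    unfolding robust_optimal_def using S'F rS rS' by force
  moreover have "\<forall>v\<in>E. 0 \<le> w v" unfolding w_def by auto
  ultimately show ?thesis using nom by blast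
qed

end
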